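(* Let $\beta=\beta_n\ge0$ with $n\beta_n\to0$, let $(\delta_n)$ be a positive sequence with $\log(\delta_n)/\log n\to0$, and fix $0<\alpha<\infty$. Set $b_n=\sqrt{2\log n}-\frac{\log\log n+2\log\delta_n+\log(4\pi)}{2\sqrt{2\log n}}$. Then there exists a sequence $(c_n)$ with $c_n\to1$ such that for all $n$ large enough, $$\frac{Z_{n-1,\alpha b_n^2-\frac\beta4,\beta}}{Z_{n,\alpha,\beta}}\le c_n\sqrt{\frac{\alpha}{2\pi}}\;b_n^{-\beta\frac{(n-1)(n-2)}{2}-n+1}.$$
   Context: For $\alpha'>0$, $\beta\ge0$, $m\ge1$, $Z_{m,\alpha',\beta}=\int_{\mathbb{R}^m}\exp(-\frac{\alpha'}{2}\sum_{i=1}^m\lambda_i^2)\prod_{1\le i<j\le m}|\lambda_i-\lambda_j|^\beta\prod_{i=1}^m\mathrm{d}\lambda_i$. *)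

theory Defs
  imports "HOL-Analysis.Analysis"
begin

definition Z :: "nat \<Rightarrow> real \<Rightarrow> real \<Rightarrow> real" where
  "Z m a b = (\<integral>x. exp (-(a/2) * (\<Sum>i<m. (x i)^2)) *
       (\<Prod>i<m. \<Prod>j\<in>{i<..<m}. \<bar>x i - x j\<bar> powr b)
     \<partial>(PiM {..<m} (\<lambda>_. lborel)))"

end

theory Submission
  imports Defs "HOL-Probability.Distributions"
begin

definition LL :: "real \<Rightarrow> real" where
  "LL u = indicator {-1..1} u * (2 * \<bar>u\<bar> powr (-1/2))"

lemma LL_nonneg: "LL u \<ge> 0" unfolding LL_def by (simp add: indicator_def)

lemma LL_meas[measurable]: "LL \<in> borel_measurable borel"
  unfolding LL_def by measurable

lemma LL_bound: "u \<noteq> 0 \<Longrightarrow> - LL u \<le> ln \<bar>u\<bar>"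
proof (cases "\<bar>u\<bar> \<ge> 1")
  case True
  then show ?thesis using LL_nonneg[of u] by (smt (verit) ln_ge_zero)
next
  case False
  assume u: "u \<noteq> 0"
  define v where "v = \<bar>u\<bar> powr (-1/2)"
  have v: "v > 0" using u by (simp add: v_def)
  have "ln \<bar>u\<bar> = -2 * ln v" using u by (simp add: v_def ln_powr)
  moreover have "ln v \<le> v - 1" using v by (rule ln_le_minus_one)
  moreover have "LL u = 2 * v" using False by (auto simp: LL_def v_def indicator_def)
  ultimately show ?thesis by simp
qed

lemma LL_hasint: "(LL has_integral 8) UNIV"
proof -
  have h01: "((\<lambda>x. 2 * \<bar>x\<bar> powr (-1/2)) has_integral 4) {0..1::real}"
  proof -
    have "((\<lambda>x. x powr (-1/2)) has_integral (1 powr (-1/2+1) / (-1/2+1))) {0..1::real}"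
      by (rule has_integral_powr_from_0) auto
    then have "((\<lambda>x. x powr (-1/2)) has_integral 2) {0..1::real}" by simp
    then have "((\<lambda>x. 2 * x powr (-1/2)) has_integral (2*2)) {0..1::real}"
      by (rule has_integral_mult_right)
    then show ?thesis by (subst has_integral_cong[where g="\<lambda>x. 2 * x powr (-1/2)"]) auto
  qed
  have hm10: "((\<lambda>x. 2 * \<bar>x\<bar> powr (-1/2)) has_integral 4) {-1..0::real}"
  proof -
    have "((\<lambda>x. 2 * \<bar>-x\<bar> powr (-1/2)) has_integral 4) {-1..-0::real}"
      using h01 by (subst has_integral_reflect_real) simp
    then show ?thesis by simp
  qed
  have "((\<lambda>x. 2 * \<bar>x\<bar> powr (-1/2)) has_integral (4+4)) {-1..1::real}"
    by (rule has_integral_combine[OF _ _ hm10 h01]) auto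
  then have "((\<lambda>x::real. if x \<in> {-1..1} then (2::real) * \<bar>x\<bar> powr (-1/2) else 0) has_integral 8) UNIV"
    by (subst has_integral_restrict_UNIV) simp
  moreover have "LL = (\<lambda>x::real. if x \<in> {-1..1} then (2::real) * \<bar>x\<bar> powr (-1/2) else 0)"
    by (auto simp: LL_def indicator_def fun_eq_iff)
  ultimately show ?thesis by simp
qed

lemma LL_nn: "(\<integral>\<^sup>+u. ennreal (LL u) \<partial>lborel) = 8"
  using nn_integral_has_integral_lborel[OF LL_meas LL_nonneg LL_hasint] by simp

lemma gauss_nn: assumes a: "\<alpha> > 0"
  shows "(\<integral>\<^sup>+y. ennreal (exp (-(\<alpha>/2) * y^2)) \<partial>lborel) = ennreal (sqrt (2*pi/\<alpha>))"
proof -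
  define \<sigma> where "\<sigma> = 1 / sqrt \<alpha>"
  have sp: "\<sigma> > 0" using a by (simp add: \<sigma>_def)
  have eq: "exp (-(\<alpha>/2) * y^2) = sqrt (2*pi/\<alpha>) * normal_density 0 \<sigma> y" for y
    using a by (simp add: normal_density_def \<sigma>_def power_divide real_sqrt_divide field_simps)
  have "(\<integral>\<^sup>+y. ennreal (normal_density 0 \<sigma> y) \<partial>lborel) = ennreal 1"
    using sp by (subst nn_integral_eq_integral) (auto intro: integrable_normal_density integral_normal_density)
  moreover have "(\<integral>\<^sup>+y. ennreal (exp (-(\<alpha>/2) * y^2)) \<partial>lborel)
     = (\<integral>\<^sup>+y. ennreal (sqrt (2*pi/\<alpha>)) * ennreal (normal_density 0 \<sigma> y) \<partial>lborel)"
    by (rule nn_integral_cong) (simp only: eq, rule ennreal_mult, use a in simp, simp)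
  ultimately show ?thesis
    by (simp add: nn_integral_cmult)
qed

lemma pointwise_lb:
  fixes x :: "nat \<Rightarrow> real"
  assumes bt: "\<beta> \<ge> 0" and g0: "0 \<le> g" and g1: "g \<le> 1" and ne: "\<forall>i\<in>{..<m}. y \<noteq> x i"
  shows "g \<le> g * (\<Prod>i<m. \<bar>x i - y\<bar> powr \<beta>) + \<beta> * (\<Sum>i<m. LL (x i - y))"
proof -
  have "(\<Prod>i<m. \<bar>x i - y\<bar> powr \<beta>) = (\<Prod>i<m. exp (\<beta> * ln \<bar>x i - y\<bar>))"
    using ne by (intro prod.cong) (auto simp: powr_def)
  also have "\<dots> = exp (\<Sum>i<m. \<beta> * ln \<bar>x i - y\<bar>)" by (simp add: exp_sum)
  also have "\<dots> \<ge> 1 + (\<Sum>i<m. \<beta> * ln \<bar>x i - y\<bar>)" by (rule exp_ge_add_one_self)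
  finally have P: "1 + (\<Sum>i<m. \<beta> * ln \<bar>x i - y\<bar>) \<le> (\<Prod>i<m. \<bar>x i - y\<bar> powr \<beta>)" .
  have "(\<Sum>i<m. \<beta> * ln \<bar>x i - y\<bar>) \<ge> (\<Sum>i<m. \<beta> * (- LL (x i - y)))"
    using ne bt by (intro sum_mono mult_left_mono LL_bound) auto
  then have P2: "1 - \<beta> * (\<Sum>i<m. LL (x i - y)) \<le> (\<Prod>i<m. \<bar>x i - y\<bar> powr \<beta>)"
    using P by (simp add: sum_distrib_left sum_negf)
  have S0: "0 \<le> \<beta> * (\<Sum>i<m. LL (x i - y))" using bt by (simp add: sum_nonneg LL_nonneg)
  have "g * (1 - \<beta> * (\<Sum>i<m. LL (x i - y))) \<le> g * (\<Prod>i<m. \<bar>x i - y\<bar> powr \<beta>)"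
    using P2 g0 by (rule mult_left_mono)
  moreover have "g * (\<beta> * (\<Sum>i<m. LL (x i - y))) \<le> \<beta> * (\<Sum>i<m. LL (x i - y))"
    using S0 g1 g0 by (simp add: mult_left_le_one_le)
  ultimately show ?thesis by (simp add: algebra_simps)
qed

lemma inner_lb:
  fixes x :: "nat \<Rightarrow> real"
  assumes a: "\<alpha> > 0" and bt: "\<beta> \<ge> 0"
  shows "ennreal (sqrt (2*pi/\<alpha>)) \<le> (\<integral>\<^sup>+y. ennreal (exp (-(\<alpha>/2) * y^2) * (\<Prod>i<m. \<bar>x i - y\<bar> powr \<beta>)) \<partial>lborel) + ennreal (8 * \<beta> * real m)"
proof -
  have AE: "AE y in lborel. \<forall>i\<in>{..<m}. y \<noteq> x i"
    by (rule eventually_ball_finite) (auto intro: AE_lborel_singleton)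
  have "ennreal (sqrt (2*pi/\<alpha>)) = (\<integral>\<^sup>+y. ennreal (exp (-(\<alpha>/2) * y^2)) \<partial>lborel)"
    using gauss_nn[OF a] by simp
  also have "\<dots> \<le> (\<integral>\<^sup>+y. ennreal (exp (-(\<alpha>/2) * y^2) * (\<Prod>i<m. \<bar>x i - y\<bar> powr \<beta>))
       + ennreal \<beta> * (\<Sum>i<m. ennreal (LL (x i - y))) \<partial>lborel)"
  proof (rule nn_integral_mono_AE)
    show "AE y in lborel. ennreal (exp (-(\<alpha>/2) * y^2)) \<le> ennreal (exp (-(\<alpha>/2) * y^2) * (\<Prod>i<m. \<bar>x i - y\<bar> powr \<beta>))
       + ennreal \<beta> * (\<Sum>i<m. ennreal (LL (x i - y)))"
      using AE
    proof eventually_elim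
      case (elim y)
      have g1: "exp (-(\<alpha>/2) * y^2) \<le> 1" using a by simp
      have "ennreal (exp (-(\<alpha>/2) * y^2) * (\<Prod>i<m. \<bar>x i - y\<bar> powr \<beta>))
       + ennreal \<beta> * (\<Sum>i<m. ennreal (LL (x i - y)))
        = ennreal (exp (-(\<alpha>/2) * y^2) * (\<Prod>i<m. \<bar>x i - y\<bar> powr \<beta>) + \<beta> * (\<Sum>i<m. LL (x i - y)))"
        using bt by (simp add: ennreal_plus ennreal_mult sum_nonneg LL_nonneg prod_nonneg flip: sum_ennreal)
      moreover have "exp (-(\<alpha>/2) * y^2) \<le> exp (-(\<alpha>/2) * y^2) * (\<Prod>i<m. \<bar>x i - y\<bar> powr \<beta>) + \<beta> * (\<Sum>i<m. LL (x i - y))"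
        by (rule pointwise_lb[OF bt _ g1 elim]) simp
      ultimately show ?case by (simp add: ennreal_leI)
    qed
  qed
  also have "\<dots> = (\<integral>\<^sup>+y. ennreal (exp (-(\<alpha>/2) * y^2) * (\<Prod>i<m. \<bar>x i - y\<bar> powr \<beta>)) \<partial>lborel)
       + ennreal \<beta> * (\<Sum>i<m. (\<integral>\<^sup>+y. ennreal (LL (x i - y)) \<partial>lborel))"
    by (subst nn_integral_add) (auto simp: nn_integral_cmult nn_integral_sum)
  also have "(\<Sum>i<m. (\<integral>\<^sup>+y. ennreal (LL (x i - y)) \<partial>lborel)) = (\<Sum>i<m. 8)"
  proof (rule sum.cong[OF refl])
    fix i
    have "(\<integral>\<^sup>+u. ennreal (LL u) \<partial>lborel) = ennreal \<bar>-1\<bar> * (\<integral>\<^sup>+y. ennreal (LL (x i + (-1) * y)) \<partial>lborel)"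
      by (rule nn_integral_real_affine) auto
    then show "(\<integral>\<^sup>+y. ennreal (LL (x i - y)) \<partial>lborel) = 8" by (simp add: LL_nn)
  qed
  also have "ennreal \<beta> * (\<Sum>i<m. (8::ennreal)) = ennreal (8 * \<beta> * real m)"
    using bt by (simp add: ennreal_mult ennreal_of_nat_eq_real_of_nat mult.commute mult.left_commute)
  finally show ?thesis .
qed

definition fint :: "nat \<Rightarrow> real \<Rightarrow> real \<Rightarrow> (nat \<Rightarrow> real) \<Rightarrow> real" where
  "fint m a b x = exp (-(a/2) * (\<Sum>i<m. (x i)^2)) *
       (\<Prod>i<m. \<Prod>j\<in>{i<..<m}. \<bar>x i - x j\<bar> powr b)"
lemma fint_meas[measurable]: "fint m a b \<in> borel_measurable (PiM {..<m} (\<lambda>_. lborel))"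
  unfolding fint_def
  apply (intro borel_measurable_times borel_measurable_prod ballI borel_measurable_exp
     borel_measurable_sum borel_measurable_power borel_measurable_times measurable_const)
  apply (auto intro!: borel_measurable_power measurable_component_singleton)
  done
lemma meas_upd: "(\<lambda>x. \<integral>\<^sup>+y. F (x(m:=y)) \<partial>lborel) \<in> borel_measurable (PiM {..<m} (\<lambda>_. lborel))"
  if "F \<in> borel_measurable (PiM {..<Suc m} (\<lambda>_. lborel))" for F :: "_ \<Rightarrow> ennreal"
proof -
  interpret product_sigma_finite "\<lambda>_. lborel" by standard
  have [measurable]: "F \<in> borel_measurable (PiM (insert m {..<m}) (\<lambda>_. lborel))"
    using that by (simp add: lessThan_Suc)
  show ?thesis by measurable
qed
lemma comp_meas: "i \<in> I \<Longrightarrow> (\<lambda>x. x i) \<in> borel_measurable (PiM I (\<lambda>_. lborel::real measure))"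
  using measurable_component_singleton[of i I "\<lambda>_. lborel::real measure"] by simp
lemma meas_scale: "(\<lambda>x. F (\<lambda>i\<in>{..<m}. c * x i)) \<in> borel_measurable (PiM {..<m} (\<lambda>_. lborel))"
  if [measurable]: "F \<in> borel_measurable (PiM {..<m} (\<lambda>_. lborel))" for F :: "_ \<Rightarrow> ennreal" and c :: real
proof -
  have "(\<lambda>x. \<lambda>i\<in>{..<m}. c * x i) \<in> PiM {..<m} (\<lambda>_. lborel) \<rightarrow>\<^sub>M PiM {..<m} (\<lambda>_. lborel)"
  proof (rule measurable_restrict)
    fix i assume im: "i \<in> {..<m}"
    have "(\<lambda>x. c * x i) \<in> borel_measurable (PiM {..<m} (\<lambda>_. lborel))"
      by (rule borel_measurable_times[OF borel_measurable_const comp_meas[OF im]])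
    then show "(\<lambda>x. c * x i) \<in> PiM {..<m} (\<lambda>_. lborel) \<rightarrow>\<^sub>M lborel" by simp
  qed
  then show ?thesis using that by (rule measurable_compose)
qed

lemma scale_nn:
  fixes c :: real assumes c: "c > 0"
  shows "F \<in> borel_measurable (PiM {..<m} (\<lambda>_. lborel)) \<Longrightarrow>
    (\<integral>\<^sup>+x. F (\<lambda>i\<in>{..<m}. c * x i) \<partial>PiM {..<m} (\<lambda>_. lborel))
      = ennreal ((1/c)^m) * (\<integral>\<^sup>+x. F x \<partial>PiM {..<m} (\<lambda>_. lborel))"
proof (induction m arbitrary: F)
  case 0
  then show ?case by (simp add: PiM_empty nn_integral_count_space_finite)
next
  case (Suc m)
  interpret product_sigma_finite "\<lambda>_. lborel" by standard
  have eq: "{..<Suc m} = insert m {..<m}" by auto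
  have FM[measurable]: "F \<in> borel_measurable (PiM (insert m {..<m}) (\<lambda>_. lborel))"
    using Suc.prems by (simp add: eq)
  define H where "H z = (\<integral>\<^sup>+y. F (z(m:=y)) \<partial>lborel)" for z
  have HM: "H \<in> borel_measurable (PiM {..<m} (\<lambda>_. lborel))"
    unfolding H_def by (rule meas_upd[OF Suc.prems])
  have GM: "(\<lambda>x. F (\<lambda>i\<in>insert m {..<m}. c * x i)) \<in> borel_measurable (PiM (insert m {..<m}) (\<lambda>_. lborel))"
    using meas_scale[OF Suc.prems, of c] by (simp add: eq)
  have "(\<integral>\<^sup>+x. F (\<lambda>i\<in>{..<Suc m}. c * x i) \<partial>PiM {..<Suc m} (\<lambda>_. lborel))
      = (\<integral>\<^sup>+x. F (\<lambda>i\<in>insert m {..<m}. c * x i) \<partial>PiM (insert m {..<m}) (\<lambda>_. lborel))"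
    by (simp add: eq)
  also have "\<dots> = (\<integral>\<^sup>+x. (\<integral>\<^sup>+y. F (\<lambda>i\<in>insert m {..<m}. c * (x(m:=y)) i) \<partial>lborel) \<partial>PiM {..<m} (\<lambda>_. lborel))"
    by (rule product_nn_integral_insert[OF _ _ GM]) auto
  also have "\<dots> = (\<integral>\<^sup>+x. ennreal (1/c) * H (\<lambda>i\<in>{..<m}. c * x i) \<partial>PiM {..<m} (\<lambda>_. lborel))"
  proof (rule nn_integral_cong)
    fix x :: "nat \<Rightarrow> real" assume x: "x \<in> space (PiM {..<m} (\<lambda>_. lborel))"
    define z where "z = (\<lambda>i\<in>{..<m}. c * x i)"
    have z: "z \<in> space (PiM {..<m} (\<lambda>_. lborel))" unfolding z_def by (simp add: space_PiM)
    have GzM: "(\<lambda>y. F (z(m:=y))) \<in> borel_measurable borel"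
      using measurable_compose[OF measurable_component_update[OF z, of m] FM] by simp
    have "(\<lambda>y. F (\<lambda>i\<in>insert m {..<m}. c * (x(m:=y)) i)) = (\<lambda>y. F (z(m := c * y)))"
      by (auto simp: z_def fun_eq_iff intro!: arg_cong[where f=F])
    then have "(\<integral>\<^sup>+y. F (\<lambda>i\<in>insert m {..<m}. c * (x(m:=y)) i) \<partial>lborel) = (\<integral>\<^sup>+y. F (z(m := c * y)) \<partial>lborel)"
      by simp
    also have "\<dots> = ennreal (1/c) * H z"
      unfolding H_def using nn_integral_real_affine[OF GzM, of c 0] c
      by (simp add: ennreal_mult[symmetric] mult.assoc[symmetric] flip: ennreal_mult')
    finally show "(\<integral>\<^sup>+y. F (\<lambda>i\<in>insert m {..<m}. c * (x(m:=y)) i) \<partial>lborel) = ennreal (1/c) * H (\<lambda>i\<in>{..<m}. c * x i)"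
      by (simp add: z_def)
  qed
  also have "\<dots> = ennreal (1/c) * (\<integral>\<^sup>+x. H (\<lambda>i\<in>{..<m}. c * x i) \<partial>PiM {..<m} (\<lambda>_. lborel))"
    by (rule nn_integral_cmult) (rule meas_scale[OF HM])
  also have "\<dots> = ennreal (1/c) * (ennreal ((1/c)^m) * (\<integral>\<^sup>+x. H x \<partial>PiM {..<m} (\<lambda>_. lborel)))"
    by (simp add: Suc.IH[OF HM])
  also have "(\<integral>\<^sup>+x. H x \<partial>PiM {..<m} (\<lambda>_. lborel)) = (\<integral>\<^sup>+x. F x \<partial>PiM (insert m {..<m}) (\<lambda>_. lborel))"
    unfolding H_def by (rule product_nn_integral_insert[symmetric]) auto
  finally show ?case using c
    by (simp add: eq ennreal_mult[symmetric] mult.assoc[symmetric])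
qed
definition NN :: "nat \<Rightarrow> real \<Rightarrow> real \<Rightarrow> ennreal" where
  "NN m a b = (\<integral>\<^sup>+x. ennreal (fint m a b x) \<partial>PiM {..<m} (\<lambda>_. lborel))"

lemma fint_nonneg: "fint m a b x \<ge> 0"
  unfolding fint_def by (intro mult_nonneg_nonneg prod_nonneg) auto

lemma Z_eq: "Z m a b = enn2real (NN m a b)"
proof -
  have "Z m a b = integral\<^sup>L (PiM {..<m} (\<lambda>_. lborel)) (fint m a b)"
    unfolding Z_def fint_def by simp
  also have "\<dots> = enn2real (NN m a b)"
    unfolding NN_def by (rule integral_eq_nn_integral) (auto simp: fint_nonneg)
  finally show ?thesis .
qed

lemma fint_Suc: "fint (Suc m) a b (x(m:=y)) = fint m a b x * (exp (-(a/2) * y^2) * (\<Prod>i<m. \<bar>x i - y\<bar> powr b))"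
proof -
  have s: "(\<Sum>i<Suc m. ((x(m:=y)) i)^2) = (\<Sum>i<m. (x i)^2) + y^2"
    by (simp add: sum.lessThan_Suc)
  have p: "(\<Prod>i<Suc m. \<Prod>j\<in>{i<..<Suc m}. \<bar>(x(m:=y)) i - (x(m:=y)) j\<bar> powr b)
     = (\<Prod>i<m. (\<Prod>j\<in>{i<..<m}. \<bar>x i - x j\<bar> powr b) * \<bar>x i - y\<bar> powr b)"
  proof -
    have "(\<Prod>i<Suc m. \<Prod>j\<in>{i<..<Suc m}. \<bar>(x(m:=y)) i - (x(m:=y)) j\<bar> powr b)
       = (\<Prod>i<m. \<Prod>j\<in>{i<..<Suc m}. \<bar>(x(m:=y)) i - (x(m:=y)) j\<bar> powr b)"
      by (simp add: prod.lessThan_Suc)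
    also have "\<dots> = (\<Prod>i<m. (\<Prod>j\<in>{i<..<m}. \<bar>x i - x j\<bar> powr b) * \<bar>x i - y\<bar> powr b)"
    proof (rule prod.cong[OF refl])
      fix i assume i: "i \<in> {..<m}"
      have e: "{i<..<Suc m} = insert m {i<..<m}" using i by auto
      have "(\<Prod>j\<in>insert m {i<..<m}. \<bar>(x(m:=y)) i - (x(m:=y)) j\<bar> powr b)
          = \<bar>(x(m:=y)) i - (x(m:=y)) m\<bar> powr b * (\<Prod>j\<in>{i<..<m}. \<bar>(x(m:=y)) i - (x(m:=y)) j\<bar> powr b)"
        by (rule prod.insert) auto
      also have "(\<Prod>j\<in>{i<..<m}. \<bar>(x(m:=y)) i - (x(m:=y)) j\<bar> powr b) = (\<Prod>j\<in>{i<..<m}. \<bar>x i - x j\<bar> powr b)"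
        using i by (intro prod.cong) auto
      finally show "(\<Prod>j\<in>{i<..<Suc m}. \<bar>(x(m:=y)) i - (x(m:=y)) j\<bar> powr b) = (\<Prod>j\<in>{i<..<m}. \<bar>x i - x j\<bar> powr b) * \<bar>x i - y\<bar> powr b"
        using i by (simp add: e)
    qed
    finally show ?thesis .
  qed
  show ?thesis
    unfolding fint_def s p prod.distrib
    by (simp add: algebra_simps exp_add[symmetric])
qed

lemma ennreal_sub_le: "ennreal a \<le> c + ennreal b \<Longrightarrow> b \<ge> 0 \<Longrightarrow> ennreal (a - b) \<le> c"
  by (metis ennreal_less_top ennreal_minus less_diff_eq_ennreal verit_comp_simplify1(3))

lemma NN_Suc_lb:
  assumes a: "\<alpha> > 0" and bt: "\<beta> \<ge> 0"
  shows "ennreal (sqrt (2*pi/\<alpha>) - 8 * \<beta> * real m) * NN m \<alpha> \<beta> \<le> NN (Suc m) \<alpha> \<beta>"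
proof -
  interpret product_sigma_finite "\<lambda>_. lborel" by standard
  have eq: "{..<Suc m} = insert m {..<m}" by auto
  have FM: "(\<lambda>x. ennreal (fint (Suc m) \<alpha> \<beta> x)) \<in> borel_measurable (PiM (insert m {..<m}) (\<lambda>_. lborel))"
    using fint_meas[of "Suc m" \<alpha> \<beta>] by (simp add: eq)
  have "NN (Suc m) \<alpha> \<beta> = (\<integral>\<^sup>+x. (\<integral>\<^sup>+y. ennreal (fint (Suc m) \<alpha> \<beta> (x(m:=y))) \<partial>lborel) \<partial>PiM {..<m} (\<lambda>_. lborel))"
    unfolding NN_def eq by (rule product_nn_integral_insert[OF _ _ FM]) auto
  also have "\<dots> = (\<integral>\<^sup>+x. ennreal (fint m \<alpha> \<beta> x) * (\<integral>\<^sup>+y. ennreal (exp (-(\<alpha>/2) * y^2) * (\<Prod>i<m. \<bar>x i - y\<bar> powr \<beta>)) \<partial>lborel) \<partial>PiM {..<m} (\<lambda>_. lborel))"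
  proof (rule nn_integral_cong)
    fix x :: "nat \<Rightarrow> real"
    have [measurable]: "(\<lambda>y. exp (-(\<alpha>/2) * y^2) * (\<Prod>i<m. \<bar>x i - y\<bar> powr \<beta>)) \<in> borel_measurable borel"
      by measurable
    show "(\<integral>\<^sup>+y. ennreal (fint (Suc m) \<alpha> \<beta> (x(m:=y))) \<partial>lborel) = ennreal (fint m \<alpha> \<beta> x) * (\<integral>\<^sup>+y. ennreal (exp (-(\<alpha>/2) * y^2) * (\<Prod>i<m. \<bar>x i - y\<bar> powr \<beta>)) \<partial>lborel)"
      unfolding fint_Suc
      by (subst nn_integral_cmult[symmetric]) (auto simp: ennreal_mult fint_nonneg prod_nonneg)
  qed
  also have "\<dots> \<ge> (\<integral>\<^sup>+x. ennreal (fint m \<alpha> \<beta> x) * ennreal (sqrt (2*pi/\<alpha>) - 8 * \<beta> * real m) \<partial>PiM {..<m} (\<lambda>_. lborel))"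
    using bt by (intro nn_integral_mono mult_left_mono ennreal_sub_le inner_lb a bt) auto
  also have "(\<integral>\<^sup>+x. ennreal (fint m \<alpha> \<beta> x) * ennreal (sqrt (2*pi/\<alpha>) - 8 * \<beta> * real m) \<partial>PiM {..<m} (\<lambda>_. lborel))
     = NN m \<alpha> \<beta> * ennreal (sqrt (2*pi/\<alpha>) - 8 * \<beta> * real m)"
    unfolding NN_def by (rule nn_integral_multc) measurable
  finally show ?thesis
    by (simp only: mult.commute)
qed

lemma pairs_count: "(\<Sum>i<m. real (card {i<..<m})) = real m * (real m - 1) / 2"
proof -
  have "(\<Sum>i<m. real (card {i<..<m})) = (\<Sum>i<m. real m - 1 - real i)"
    by (intro sum.cong) (auto simp: of_nat_diff)
  also have "\<dots> = real m * (real m - 1) - (\<Sum>i<m. real i)"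
    by (simp add: sum_subtractf)
  also have "(\<Sum>i<m. real i) = real m * (real m - 1) / 2"
    by (induction m) (auto simp: field_simps)
  finally show ?thesis by simp
qed

lemma pairs_count2: "(\<Sum>i<m. real m - (1 + real i)) = real m * (real m - 1) / 2"
  using pairs_count[of m] by simp

lemma aux_mult: "(p::real) * p' = 1 \<Longrightarrow> e * q = p * (e * (p' * q))"
proof -
  assume h: "p * p' = 1"
  have "p * (e * (p' * q)) = (p * p') * (e * q)" by (simp only: mult_ac)
  then show ?thesis using h by simp
qed

lemma fint_scale:
  assumes s: "s > 0"
  shows "fint m (a * s^2) b x = s powr (-(b * (real m * (real m - 1) / 2))) * fint m a b (\<lambda>i\<in>{..<m}. s * x i)"
proof -
  have "fint m a b (\<lambda>i\<in>{..<m}. s * x i) = exp (-(a/2) * (\<Sum>i<m. (s * x i)^2)) *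
       (\<Prod>i<m. \<Prod>j\<in>{i<..<m}. \<bar>s * x i - s * x j\<bar> powr b)"
    unfolding fint_def by (intro arg_cong2[where f="(*)"] arg_cong[where f=exp] arg_cong[where f="\<lambda>t. -(a/2) * t"] sum.cong prod.cong) auto
  also have "(\<Prod>i<m. \<Prod>j\<in>{i<..<m}. \<bar>s * x i - s * x j\<bar> powr b) = (\<Prod>i<m. \<Prod>j\<in>{i<..<m}. s powr b * \<bar>x i - x j\<bar> powr b)"
    using s by (intro prod.cong refl) (simp add: right_diff_distrib[symmetric] abs_mult powr_mult)
  also have "\<dots> = (\<Prod>i<m. \<Prod>j\<in>{i<..<m}. s powr b) * (\<Prod>i<m. \<Prod>j\<in>{i<..<m}. \<bar>x i - x j\<bar> powr b)"
    by (simp add: prod.distrib)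
  also have "(\<Prod>i<m. \<Prod>j\<in>{i<..<m}. s powr b) = s powr (b * (real m * (real m - 1) / 2))"
  proof -
    have "(\<Prod>i<m. \<Prod>j\<in>{i<..<m}. s powr b) = (\<Prod>i<m. s powr (b * real (card {i<..<m})))"
      using s by (simp add: powr_realpow[symmetric] powr_powr)
    also have "\<dots> = s powr (\<Sum>i<m. b * real (card {i<..<m}))"
      using s by (simp add: powr_sum)
    finally show ?thesis by (simp add: pairs_count2 sum_distrib_left[symmetric])
  qed
  finally have ch: "fint m a b (\<lambda>i\<in>{..<m}. s * x i) = exp (-(a/2) * (\<Sum>i<m. (s * x i)^2)) *
       (s powr (b * (real m * (real m - 1) / 2)) * (\<Prod>i<m. \<Prod>j\<in>{i<..<m}. \<bar>x i - x j\<bar> powr b))" .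
  define t where "t = b * (real m * (real m - 1) / 2)"
  define Q where "Q = (\<Prod>i<m. \<Prod>j\<in>{i<..<m}. \<bar>x i - x j\<bar> powr b)"
  define S where "S = (\<Sum>i<m. (x i)^2)"
  have e1: "(\<Sum>i<m. (s * x i)^2) = s^2 * S" by (simp add: S_def power_mult_distrib sum_distrib_left)
  have e2: "s powr (-t) * s powr t = 1" using s by (simp add: powr_minus)
  have e3: "-(a/2) * (s^2 * S) = -(a * s^2/2) * S" by simp
  have f1: "fint m (a * s^2) b x = exp (-(a * s^2/2) * S) * Q"
    unfolding fint_def Q_def S_def by (rule refl)
  have f2: "fint m a b (\<lambda>i\<in>{..<m}. s * x i) = exp (-(a * s^2/2) * S) * (s powr t * Q)"
    unfolding ch e1 e3 t_def[symmetric] Q_def[symmetric] by (rule refl)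
  show ?thesis unfolding t_def[symmetric] f1 f2 by (rule aux_mult[OF e2])
qed

lemma NN_scale:
  assumes s: "s > 0"
  shows "NN m (a * s^2) b = ennreal (s powr (-(b * (real m * (real m - 1) / 2))) * (1/s)^m) * NN m a b"
proof -
  have "NN m (a * s^2) b = (\<integral>\<^sup>+x. ennreal (s powr (-(b * (real m * (real m - 1) / 2)))) * ennreal (fint m a b (\<lambda>i\<in>{..<m}. s * x i)) \<partial>PiM {..<m} (\<lambda>_. lborel))"
    unfolding NN_def fint_scale[OF s] by (intro nn_integral_cong) (simp add: ennreal_mult fint_nonneg)
  also have "\<dots> = ennreal (s powr (-(b * (real m * (real m - 1) / 2)))) * (\<integral>\<^sup>+x. ennreal (fint m a b (\<lambda>i\<in>{..<m}. s * x i)) \<partial>PiM {..<m} (\<lambda>_. lborel))"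
    by (rule nn_integral_cmult) (rule meas_scale, measurable)
  also have "(\<integral>\<^sup>+x. ennreal (fint m a b (\<lambda>i\<in>{..<m}. s * x i)) \<partial>PiM {..<m} (\<lambda>_. lborel)) = ennreal ((1/s)^m) * NN m a b"
    unfolding NN_def by (rule scale_nn[OF s, where F="\<lambda>x. ennreal (fint m a b x)"]) measurable
  finally show ?thesis using s by (simp add: ennreal_mult mult.assoc)
qed

lemma lnlim: "filterlim (\<lambda>n. ln (real n)) at_top sequentially"
  by (rule filterlim_compose[OF ln_at_top filterlim_real_sequentially])

lemma ln_small: fixes L :: real assumes L: "L \<ge> 64" shows "ln L \<le> L / 4"
proof -
  have sL: "sqrt L \<ge> 8" using L real_sqrt_le_mono[of 64 L] by simp
  have "ln L = 2 * ln (sqrt L)" using L by (simp add: ln_sqrt)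
  also have "\<dots> \<le> 2 * (sqrt L - 1)" using ln_le_minus_one[of "sqrt L"] sL L by simp
  also have "\<dots> \<le> 2 * sqrt L" by simp
  also have "\<dots> \<le> sqrt L * sqrt L / 4"
  proof -
    have "8 * sqrt L \<le> sqrt L * sqrt L" using sL by (rule mult_right_mono) (use L in simp)
    then show ?thesis using L by simp
  qed
  also have "sqrt L * sqrt L = L" using L by simp
  finally show ?thesis .
qed

lemma b_ge:
  fixes \<delta> b :: "nat \<Rightarrow> real"
  assumes delta_lim: "(\<lambda>n. ln (\<delta> n) / ln (real n)) \<longlonglongrightarrow> 0"
    and b_def: "\<And>n. b n = sqrt (2 * ln (real n))
        - (ln (ln (real n)) + 2 * ln (\<delta> n) + ln (4 * pi)) / (2 * sqrt (2 * ln (real n)))"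
  shows "eventually (\<lambda>n. b n \<ge> 1) sequentially"
proof -
  have ev1: "eventually (\<lambda>n. ln (real n) \<ge> 64) sequentially"
    using filterlim_at_top[THEN iffD1, OF lnlim] by blast
  have ev2: "eventually (\<lambda>n. dist (ln (\<delta> n) / ln (real n)) 0 < 1/8) sequentially"
    using tendstoD[OF delta_lim, of "1/8"] by simp
  show ?thesis using ev1 ev2
  proof eventually_elim
    case (elim n)
    define L where "L = ln (real n)"
    have L: "L \<ge> 64" using elim by (simp add: L_def)
    have d: "\<bar>ln (\<delta> n)\<bar> \<le> L / 8"
      using elim L by (simp add: L_def[symmetric] abs_divide divide_less_eq)
    have l1: "ln L \<le> L / 4" using ln_small[OF L] .
    have "ln (4 * pi) \<le> 4 * pi - 1" by (rule ln_le_minus_one) (simp add: pi_gt_zero)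
    then have l2: "ln (4 * pi) \<le> L / 4" using pi_less_4 L by linarith
    define sq where "sq = sqrt (2 * L)"
    have sqp: "sq > 0" using L by (simp add: sq_def)
    have sq2: "sq * sq = 2 * L" using L by (simp add: sq_def)
    have sqge: "sq \<ge> 2" using L real_sqrt_le_mono[of 4 "2*L"] by (simp add: sq_def)
    have num: "ln L + 2 * ln (\<delta> n) + ln (4 * pi) \<le> 3 * L / 4" using d l1 l2 by linarith
    have "(ln L + 2 * ln (\<delta> n) + ln (4 * pi)) / (2 * sq) \<le> (3 * L / 4) / (2 * sq)"
      using num sqp by (intro divide_right_mono) auto
    also have "(3 * L / 4) / (2 * sq) = 3 * sq / 16" using sq2 sqp by (simp add: field_simps)
    finally have "b n \<ge> sq - 3 * sq / 16" by (simp add: b_def L_def[symmetric] sq_def[symmetric])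
    then show ?case using sqge by linarith
  qed
qed

lemma powr_bound: fixes \<epsilon> E :: real
  assumes e0: "0 \<le> \<epsilon>" and e1: "\<epsilon> \<le> 1/2" and E: "E \<ge> 0"
  shows "(1 - \<epsilon>) powr (-E) \<le> exp (2 * \<epsilon> * E)"
proof -
  have "-\<epsilon> - 2 * \<epsilon>^2 \<le> ln (1 - \<epsilon>)" by (rule ln_one_minus_pos_lower_bound[OF e0 e1])
  then have "- ln (1 - \<epsilon>) \<le> \<epsilon> + 2 * \<epsilon>^2" by linarith
  from mult_left_mono[OF this E] have "-E * ln (1 - \<epsilon>) \<le> E * (\<epsilon> + 2 * \<epsilon>^2)" by simp
  also have "\<dots> \<le> E * (2 * \<epsilon>)" using E e0 e1
  proof (intro mult_left_mono)
    have "\<epsilon> * \<epsilon> \<le> \<epsilon> * (1/2)" using e0 e1 by (rule mult_left_mono[rotated])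
    then show "\<epsilon> + 2 * \<epsilon>^2 \<le> 2 * \<epsilon>" by (simp add: power2_eq_square)
  qed
  finally have h: "-E * ln (1 - \<epsilon>) \<le> 2 * \<epsilon> * E" by (simp add: mult_ac)
  have "(1 - \<epsilon>) powr (-E) = exp (-E * ln (1 - \<epsilon>))" using e1 by (simp add: powr_def)
  also have "\<dots> \<le> exp (2 * \<epsilon> * E)" using h by simp
  finally show ?thesis .
qed

lemma main_ineq:
  fixes \<alpha> \<beta> bb K \<epsilon> E :: real and n :: nat
  assumes n: "n \<ge> 3" and a: "\<alpha> > 0" and bt: "\<beta> \<ge> 0" and bb: "bb \<ge> 1" and bt2: "\<beta> \<le> 2 * \<alpha>"
    and K: "K > 0" and Kdef: "K = sqrt (2*pi/\<alpha>) - 8 * \<beta> * (real n - 1)"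
    and \<epsilon>def: "\<epsilon> = \<beta> / (4 * \<alpha> * bb^2)"
    and Edef: "E = (real n - 1) / 2 + \<beta> * ((real n - 1) * (real n - 2) / 2) / 2"
  shows "Z (n - 1) (\<alpha> * bb^2 - \<beta> / 4) \<beta> / Z n \<alpha> \<beta>
     \<le> exp (2 * \<epsilon> * E) / (K * sqrt (\<alpha> / (2 * pi))) * sqrt (\<alpha> / (2 * pi)) *
          bb powr (- \<beta> * ((real n - 1) * (real n - 2) / 2) - real n + 1)"
proof -
  define m where "m = n - 1"
  have nm: "n = Suc m" and rm: "real m = real n - 1" using n by (auto simp: m_def of_nat_diff)
  define a' where "a' = \<alpha> * bb^2 - \<beta> / 4"
  have bb2: "bb^2 \<ge> 1" using bb by (simp add: one_le_power)
  have "\<alpha> * 1 \<le> \<alpha> * bb^2" using a bb2 by (intro mult_left_mono) auto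
  then have a'pos: "a' > 0" using bt2 a unfolding a'_def by linarith
  define s where "s = sqrt (a' / \<alpha>)"
  have sp: "s > 0" using a'pos a by (simp add: s_def)
  have as: "\<alpha> * s^2 = a'" using a'pos a by (simp add: s_def)
  have e0: "0 \<le> \<epsilon>" using bt a by (simp add: \<epsilon>def)
  have bbp: "bb^2 > 0" using bb2 by linarith
  have "\<epsilon> \<le> \<beta> / (4 * \<alpha>)" unfolding \<epsilon>def using a bt bb2 bbp
    by (intro divide_left_mono) (auto simp: mult_le_cancel_left1 zero_less_mult_iff)
  also have "\<dots> \<le> 1/2" using bt2 a by (simp add: field_simps)
  finally have e1: "\<epsilon> \<le> 1/2" .
  have E0: "E \<ge> 0" using n bt by (simp add: Edef)
  have exp_eq: "- \<beta> * ((real n - 1) * (real n - 2) / 2) - real n + 1 = - (2 * E)"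
    unfolding Edef by (simp add: field_simps)
  define T where "T = s powr (-(\<beta> * (real m * (real m - 1) / 2))) * (1/s)^m"
  have T0: "T \<ge> 0" using sp by (simp add: T_def)
  have rn: "real n = real m + 1" using rm by simp
  have ex: "-(\<beta> * (real m * (real m - 1) / 2)) + - real m = - (2 * E)"
    using rn Edef by (simp add: algebra_simps add_divide_distrib diff_divide_distrib)
  have "T = s powr (-(\<beta> * (real m * (real m - 1) / 2))) * s powr (- real m)"
    using sp by (simp add: T_def powr_minus_divide powr_realpow power_one_over)
  also have "\<dots> = s powr (-(\<beta> * (real m * (real m - 1) / 2)) + - real m)"
    by (rule powr_add[symmetric])
  also have "\<dots> = s powr (- (2 * E))" by (simp only: ex)
  finally have T1: "T = s powr (- (2 * E))" .
  have s_eq: "s = bb * sqrt (1 - \<epsilon>)"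
  proof -
    have "a' / \<alpha> = bb^2 * (1 - \<epsilon>)" using a bb2 bb by (simp add: a'_def \<epsilon>def field_simps)
    then show ?thesis using bb by (simp add: s_def real_sqrt_mult)
  qed
  have "T = bb powr (- (2 * E)) * (sqrt (1 - \<epsilon>)) powr (- (2 * E))"
    unfolding T1 s_eq using bb e1 by (simp add: powr_mult)
  also have "(sqrt (1 - \<epsilon>)) powr (- (2 * E)) = (1 - \<epsilon>) powr (- E)"
    using e1 by (simp add: powr_half_sqrt[symmetric] powr_powr)
  finally have T2: "T \<le> bb powr (- (2 * E)) * exp (2 * \<epsilon> * E)"
    using powr_bound[OF e0 e1 E0] by (simp add: mult_left_mono)
  define A where "A = NN m \<alpha> \<beta>"
  define B where "B = NN n \<alpha> \<beta>"
  have h1: "NN m a' \<beta> = ennreal T * A"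
    unfolding A_def T_def using NN_scale[OF sp, of m \<alpha> \<beta>] by (simp add: as)
  have h2: "ennreal K * A \<le> B"
    using NN_Suc_lb[OF a bt, of m] by (simp add: A_def B_def nm[symmetric] rm Kdef)
  have Zl: "Z (n - 1) (\<alpha> * bb^2 - \<beta> / 4) \<beta> = T * enn2real A"
  proof -
    have "Z (n - 1) (\<alpha> * bb^2 - \<beta> / 4) \<beta> = enn2real (NN m a' \<beta>)" unfolding Z_eq m_def a'_def ..
    also have "\<dots> = T * enn2real A" unfolding h1 using T0 by (simp add: enn2real_mult)
    finally show ?thesis .
  qed
  have Zr: "Z n \<alpha> \<beta> = enn2real B" by (simp add: Z_eq B_def)
  define R where "R = exp (2 * \<epsilon> * E) / (K * sqrt (\<alpha> / (2 * pi))) * sqrt (\<alpha> / (2 * pi)) *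
          bb powr (- (2 * E))"
  have sq0: "sqrt (\<alpha> / (2 * pi)) > 0" using a by simp
  have R_eq: "R = bb powr (- (2 * E)) * exp (2 * \<epsilon> * E) / K"
    unfolding R_def using sq0 K by (simp add: field_simps)
  have R0: "R \<ge> 0" unfolding R_eq using K by simp
  have TK: "T / K \<le> R" unfolding R_eq using T2 K by (simp add: divide_right_mono)
  have "T * enn2real A / enn2real B \<le> R"
  proof (cases "enn2real A = 0 \<or> enn2real B = 0")
    case True
    then show ?thesis using R0 by auto
  next
    case False
    then have nA: "enn2real A \<noteq> 0" and nB: "enn2real B \<noteq> 0" by auto
    have Bf: "B < top" using nB by (metis enn2real_top top.not_eq_extremum)
    have Ap: "enn2real A > 0" using nA enn2real_nonneg[of A] by linarith
    have "enn2real (ennreal K * A) \<le> enn2real B" using h2 Bf by (rule enn2real_mono)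
    then have KA: "K * enn2real A \<le> enn2real B" using K by (simp add: enn2real_mult)
    have "T * enn2real A / enn2real B \<le> T * enn2real A / (K * enn2real A)"
    proof (rule divide_left_mono)
      have "0 < K * enn2real A" using K Ap by simp
      moreover have "0 < enn2real B" using KA \<open>0 < K * enn2real A\<close> by linarith
      ultimately show "0 < enn2real B * (K * enn2real A)" by simp
    qed (use KA T0 Ap in auto)
    also have "\<dots> = T / K" using Ap by simp
    finally show ?thesis using TK by linarith
  qed
  then show ?thesis unfolding Zl Zr exp_eq R_def .
qed

theorem lemma2p5:
  fixes \<beta> \<delta> :: "nat \<Rightarrow> real" and \<alpha> :: real and b :: "nat \<Rightarrow> real"
  assumes beta_nonneg: "\<And>n. \<beta> n \<ge> 0"
    and beta_lim: "(\<lambda>n. real n * \<beta> n) \<longlonglongrightarrow> 0"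
    and delta_pos: "\<And>n. \<delta> n > 0"
    and delta_lim: "(\<lambda>n. ln (\<delta> n) / ln (real n)) \<longlonglongrightarrow> 0"
    and alpha_pos: "\<alpha> > 0"
    and b_def: "\<And>n. b n = sqrt (2 * ln (real n))
        - (ln (ln (real n)) + 2 * ln (\<delta> n) + ln (4 * pi)) / (2 * sqrt (2 * ln (real n)))"
  shows "\<exists>c :: nat \<Rightarrow> real. c \<longlonglongrightarrow> 1 \<and>
    (\<forall>\<^sub>F n in sequentially.
       Z (n - 1) (\<alpha> * (b n)^2 - \<beta> n / 4) (\<beta> n) / Z n \<alpha> (\<beta> n)
       \<le> c n * sqrt (\<alpha> / (2 * pi)) *
          b n powr (- \<beta> n * ((real n - 1) * (real n - 2) / 2) - real n + 1))"
proof -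
  define E where "E n = (real n - 1) / 2 + \<beta> n * ((real n - 1) * (real n - 2) / 2) / 2" for n
  define \<epsilon> where "\<epsilon> n = \<beta> n / (4 * \<alpha> * (b n)^2)" for n
  define K where "K n = sqrt (2*pi/\<alpha>) - 8 * \<beta> n * (real n - 1)" for n
  define c where "c n = exp (2 * \<epsilon> n * E n) / (K n * sqrt (\<alpha> / (2 * pi)))" for n
  have ev1: "eventually (\<lambda>n. n \<ge> 3) sequentially" by (rule eventually_ge_at_top)
  have b0: "\<beta> \<longlonglongrightarrow> 0"
  proof (rule tendsto_sandwich[OF _ _ tendsto_const beta_lim])
    show "eventually (\<lambda>n. 0 \<le> \<beta> n) sequentially" using beta_nonneg by simp
    show "eventually (\<lambda>n. \<beta> n \<le> real n * \<beta> n) sequentially"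
      using eventually_ge_at_top[of 1]
    proof eventually_elim
      case (elim n)
      then show ?case using beta_nonneg[of n] mult_right_mono[of 1 "real n" "\<beta> n"] by simp
    qed
  qed
  have bge: "eventually (\<lambda>n. b n \<ge> 1) sequentially" by (rule b_ge[OF delta_lim b_def])
  have Kfun: "K = (\<lambda>n. sqrt (2*pi/\<alpha>) - 8 * (real n * \<beta> n) + 8 * \<beta> n)"
    by (auto simp: K_def fun_eq_iff algebra_simps)
  have Klim: "K \<longlonglongrightarrow> sqrt (2*pi/\<alpha>)"
    unfolding Kfun by (rule tendsto_eq_intros beta_lim b0 | simp)+
  have Kpos: "eventually (\<lambda>n. K n > 0) sequentially"
    using order_tendstoD(1)[OF Klim, of 0] alpha_pos by simp
  have bsmall: "eventually (\<lambda>n. \<beta> n < 2 * \<alpha>) sequentially"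
    using order_tendstoD(2)[OF b0, of "2*\<alpha>"] alpha_pos by simp
  have eElim: "(\<lambda>n. \<epsilon> n * E n) \<longlonglongrightarrow> 0"
  proof (rule tendsto_sandwich[where f="\<lambda>_. 0" and h="\<lambda>n. (real n * \<beta> n) / (8*\<alpha>) + (real n * \<beta> n)^2 / (16*\<alpha>)"])
    show "eventually (\<lambda>n. 0 \<le> \<epsilon> n * E n) sequentially"
      using ev1
    proof eventually_elim
      case (elim n)
      have "\<epsilon> n \<ge> 0" using beta_nonneg[of n] alpha_pos by (simp add: \<epsilon>_def)
      moreover have "E n \<ge> 0" using elim beta_nonneg[of n] by (simp add: E_def)
      ultimately show ?case by simp
    qed
    show "eventually (\<lambda>n. \<epsilon> n * E n \<le> (real n * \<beta> n) / (8*\<alpha>) + (real n * \<beta> n)^2 / (16*\<alpha>)) sequentially"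
      using ev1 bge
    proof eventually_elim
      case (elim n)
      have bb2: "(b n)^2 \<ge> 1" using elim by (simp add: one_le_power)
      have e0: "\<epsilon> n \<ge> 0" using beta_nonneg[of n] alpha_pos by (simp add: \<epsilon>_def)
      have e1: "\<epsilon> n \<le> \<beta> n / (4 * \<alpha>)" unfolding \<epsilon>_def using alpha_pos beta_nonneg[of n] bb2
        by (intro divide_left_mono) (auto simp: mult_le_cancel_left1 zero_less_mult_iff)
      have E0: "E n \<ge> 0" using elim beta_nonneg[of n] by (simp add: E_def)
      have "(real n - 1) * (real n - 2) \<le> real n * real n" using elim
        by (intro mult_mono) auto
      then have "\<beta> n * ((real n - 1) * (real n - 2)) \<le> \<beta> n * (real n * real n)"
        using beta_nonneg[of n] by (rule mult_left_mono)
      then have E1: "E n \<le> real n / 2 + \<beta> n * (real n * real n) / 4"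
      proof -
        define X where "X = \<beta> n * ((real n - 1) * (real n - 2))"
        define Y where "Y = \<beta> n * (real n * real n)"
        have XY: "X \<le> Y" unfolding X_def Y_def by fact
        have "E n = (real n - 1) / 2 + X / 4" unfolding E_def X_def by simp
        then show ?thesis using XY unfolding Y_def[symmetric] by (simp add: field_simps)
      qed
      have "\<epsilon> n * E n \<le> (\<beta> n / (4 * \<alpha>)) * (real n / 2 + \<beta> n * (real n * real n) / 4)"
        using e0 e1 E0 E1 by (intro mult_mono) auto
      also have "\<dots> = (real n * \<beta> n) / (8*\<alpha>) + (real n * \<beta> n)^2 / (16*\<alpha>)"
        using alpha_pos by (simp add: field_simps power2_eq_square)
      finally show ?case .
    qed
    have l1: "(\<lambda>n. (real n * \<beta> n) / (8*\<alpha>)) \<longlonglongrightarrow> 0" by (rule tendsto_divide_zero[OF beta_lim])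
    have l2: "(\<lambda>n. (real n * \<beta> n)^2) \<longlonglongrightarrow> 0" using tendsto_power[OF beta_lim, of 2] by simp
    have l3: "(\<lambda>n. (real n * \<beta> n)^2 / (16*\<alpha>)) \<longlonglongrightarrow> 0" by (rule tendsto_divide_zero[OF l2])
    show "(\<lambda>n. (real n * \<beta> n) / (8*\<alpha>) + (real n * \<beta> n)^2 / (16*\<alpha>)) \<longlonglongrightarrow> 0"
      using tendsto_add[OF l1 l3] by simp
  qed simp
  have sqne: "sqrt (2*pi/\<alpha>) * sqrt (\<alpha> / (2 * pi)) = 1"
    using alpha_pos by (simp add: real_sqrt_mult[symmetric])
  have clim: "c \<longlonglongrightarrow> 1"
  proof -
    have "(\<lambda>n. exp (2 * (\<epsilon> n * E n)) / (K n * sqrt (\<alpha> / (2 * pi)))) \<longlonglongrightarrow> exp (2 * 0) / (sqrt (2*pi/\<alpha>) * sqrt (\<alpha> / (2 * pi)))"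
      by (intro tendsto_intros eElim Klim) (use sqne in simp)
    moreover have "c = (\<lambda>n. exp (2 * (\<epsilon> n * E n)) / (K n * sqrt (\<alpha> / (2 * pi))))"
      by (rule ext) (simp add: c_def mult.assoc)
    ultimately show ?thesis by (simp add: sqne)
  qed
  show ?thesis
  proof (intro exI conjI)
    show "c \<longlonglongrightarrow> 1" by (rule clim)
    show "\<forall>\<^sub>F n in sequentially.
       Z (n - 1) (\<alpha> * (b n)^2 - \<beta> n / 4) (\<beta> n) / Z n \<alpha> (\<beta> n)
       \<le> c n * sqrt (\<alpha> / (2 * pi)) *
          b n powr (- \<beta> n * ((real n - 1) * (real n - 2) / 2) - real n + 1)"
      using ev1 bge bsmall Kpos
    proof eventually_elim
      case (elim n)
      show ?case unfolding c_def
        by (rule main_ineq[OF elim(1) alpha_pos beta_nonneg elim(2) _ elim(4) K_def \<epsilon>_def E_def])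
           (use elim(3) in simp)
    qed
  qed
qed

end
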